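(* Let $T = V/\Lambda$ be a compact torus of real dimension $n$ with a flat metric, where $V$ is an $n$-dimensional real vector space with an inner product and $\Lambda\le V$ a lattice of rank $n$, and let $T^{\mathbb{C}} = V^{\mathbb{C}}/\Lambda$ with $V^{\mathbb{C}} = V\otimes_{\mathbb{R}}\mathbb{C}$, containing $T$ via $V\hookrightarrow V^{\mathbb{C}}$. Suppose a finite group $\Gamma$ acts freely on $T$ by isometries. Then there exists a unique holomorphic $\Gamma$-action on $T^{\mathbb{C}}$ for which the inclusion $T\hookrightarrow T^{\mathbb{C}}$ is $\Gamma$-equivariant. Furthermore, this action is algebraic with respect to the algebraic structure on $T^{\mathbb{C}}$ induced by the biholomorphism $T^{\mathbb{C}}\to(\mathbb{C}^\times)^n$, $\sum_\alpha u_\alpha\lambda_\alpha + \Lambda\mapsto(e^{2\pi i u_1},\dots,e^{2\pi i u_n})$, for a $\mathbb{Z}$-basis $\lambda_1,\dots,\lambda_n$ of $\Lambda$. *)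

theory Defs
  imports "HOL-Analysis.Analysis" "HOL-Algebra.Group"
begin

text \<open>Flat torus T = V / Lambda with V = real^'n (standard inner product), and
  Lambda the lattice with Z-basis b.  Its complexification is complex^'n / Lambda.
  Points of the quotients are represented by points of the covering spaces; maps
  of the quotients by maps of the covering spaces respecting the equivalence.\<close>

definition lattice_basis :: "('n::finite \<Rightarrow> real^'n) \<Rightarrow> bool" where
  "lattice_basis b \<longleftrightarrow> (\<forall>c. (\<Sum>i\<in>UNIV. c i *\<^sub>R b i) = 0 \<longrightarrow> (\<forall>i. c i = 0))"

definition lattice :: "('n::finite \<Rightarrow> real^'n) \<Rightarrow> (real^'n) set" where
  "lattice b = {(\<Sum>i\<in>UNIV. of_int (k i) *\<^sub>R b i) | k. True}"

definition embC :: "real^'n \<Rightarrow> complex^'n" where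
  "embC x = (\<chi> j. complex_of_real (x $ j))"

definition clattice :: "('n::finite \<Rightarrow> real^'n) \<Rightarrow> (complex^'n) set" where
  "clattice b = embC ` lattice b"

definition lat_eq :: "('n::finite \<Rightarrow> real^'n) \<Rightarrow> real^'n \<Rightarrow> real^'n \<Rightarrow> bool" where
  "lat_eq b x y \<longleftrightarrow> x - y \<in> lattice b"

definition clat_eq :: "('n::finite \<Rightarrow> real^'n) \<Rightarrow> complex^'n \<Rightarrow> complex^'n \<Rightarrow> bool" where
  "clat_eq b z w \<longleftrightarrow> z - w \<in> clattice b"

definition tdist :: "('n::finite \<Rightarrow> real^'n) \<Rightarrow> real^'n \<Rightarrow> real^'n \<Rightarrow> real" where
  "tdist b x y = Inf ((\<lambda>l. norm (x - y - l)) ` lattice b)"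

definition quot_action :: "('x \<Rightarrow> 'x \<Rightarrow> bool) \<Rightarrow> ('g, 'z) monoid_scheme \<Rightarrow> ('g \<Rightarrow> 'x \<Rightarrow> 'x) \<Rightarrow> bool" where
  "quot_action R G \<phi> \<longleftrightarrow>
     (\<forall>g\<in>carrier G. \<forall>x y. R x y \<longrightarrow> R (\<phi> g x) (\<phi> g y)) \<and>
     (\<forall>x. R (\<phi> \<one>\<^bsub>G\<^esub> x) x) \<and>
     (\<forall>g\<in>carrier G. \<forall>h\<in>carrier G. \<forall>x. R (\<phi> (g \<otimes>\<^bsub>G\<^esub> h) x) (\<phi> g (\<phi> h x)))"

definition free_quot_action :: "('x \<Rightarrow> 'x \<Rightarrow> bool) \<Rightarrow> ('g, 'z) monoid_scheme \<Rightarrow> ('g \<Rightarrow> 'x \<Rightarrow> 'x) \<Rightarrow> bool" where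
  "free_quot_action R G \<phi> \<longleftrightarrow> (\<forall>g\<in>carrier G. g \<noteq> \<one>\<^bsub>G\<^esub> \<longrightarrow> (\<forall>x. \<not> R (\<phi> g x) x))"

definition torus_isometry :: "('n::finite \<Rightarrow> real^'n) \<Rightarrow> (real^'n \<Rightarrow> real^'n) \<Rightarrow> bool" where
  "torus_isometry b f \<longleftrightarrow> (\<forall>x y. tdist b (f x) (f y) = tdist b x y)"

definition cvec_holomorphic_on :: "(complex^'n \<Rightarrow> complex^'m) \<Rightarrow> (complex^'n) set \<Rightarrow> bool" where
  "cvec_holomorphic_on f S \<longleftrightarrow> open S \<and>
     (\<forall>z\<in>S. \<exists>L. (f has_derivative L) (at z) \<and>
        (\<forall>c v. L (\<chi> j. c * v $ j) = (\<chi> j. c * L v $ j)))"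

definition ctorus_holomorphic :: "('n::finite \<Rightarrow> real^'n) \<Rightarrow> (complex^'n \<Rightarrow> complex^'n) \<Rightarrow> bool" where
  "ctorus_holomorphic b f \<longleftrightarrow>
     (\<forall>z. \<exists>e>0. \<exists>h. cvec_holomorphic_on h (ball z e) \<and> (\<forall>w\<in>ball z e. clat_eq b (h w) (f w)))"

definition ctorus_holo_action :: "('n::finite \<Rightarrow> real^'n) \<Rightarrow> ('g, 'z) monoid_scheme \<Rightarrow> ('g \<Rightarrow> complex^'n \<Rightarrow> complex^'n) \<Rightarrow> bool" where
  "ctorus_holo_action b G \<psi> \<longleftrightarrow> quot_action (clat_eq b) G \<psi> \<and> (\<forall>g\<in>carrier G. ctorus_holomorphic b (\<psi> g))"

definition equivariant_incl :: "('n::finite \<Rightarrow> real^'n) \<Rightarrow> ('g, 'z) monoid_scheme \<Rightarrow> ('g \<Rightarrow> real^'n \<Rightarrow> real^'n) \<Rightarrow> ('g \<Rightarrow> complex^'n \<Rightarrow> complex^'n) \<Rightarrow> bool" where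
  "equivariant_incl b G \<phi> \<psi> \<longleftrightarrow> (\<forall>g\<in>carrier G. \<forall>x. clat_eq b (\<psi> g (embC x)) (embC (\<phi> g x)))"

definition ccomb :: "('n::finite \<Rightarrow> real^'n) \<Rightarrow> ('n \<Rightarrow> complex) \<Rightarrow> complex^'n" where
  "ccomb b u = (\<chi> j. \<Sum>i\<in>UNIV. u i * complex_of_real (b i $ j))"

definition ccoords :: "('n::finite \<Rightarrow> real^'n) \<Rightarrow> complex^'n \<Rightarrow> ('n \<Rightarrow> complex)" where
  "ccoords b z = (THE u. ccomb b u = z)"

definition expmap :: "('n::finite \<Rightarrow> real^'n) \<Rightarrow> complex^'n \<Rightarrow> complex^'n" where
  "expmap b z = (\<chi> i. exp (2 * of_real pi * \<i> * ccoords b z i))"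

text \<open>Laurent polynomials in n variables (regular functions on (C^*)^n):
  finite set of exponent vectors K and coefficients c.\<close>
definition laurent_eval :: "('n::finite \<Rightarrow> int) set \<Rightarrow> (('n \<Rightarrow> int) \<Rightarrow> complex) \<Rightarrow> complex^'n \<Rightarrow> complex" where
  "laurent_eval K c w = (\<Sum>k\<in>K. c k * (\<Prod>i\<in>UNIV. (w $ i) powi (k i)))"

text \<open>A map of T^C is algebraic (a morphism of the variety (C^*)^n, transported
  via expmap) iff in the exponential coordinates each component is a Laurent polynomial.\<close>
definition ctorus_algebraic :: "('n::finite \<Rightarrow> real^'n) \<Rightarrow> (complex^'n \<Rightarrow> complex^'n) \<Rightarrow> bool" where
  "ctorus_algebraic b f \<longleftrightarrow>
     (\<exists>K c. (\<forall>j. finite (K j)) \<and>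
        (\<forall>z j. expmap b (f z) $ j = laurent_eval (K j) (c j) (expmap b z)))"

end

theory Submission
  imports Defs "HOL-Complex_Analysis.Complex_Analysis"
begin


lemma lat_0: "0 \<in> lattice b"
  unfolding lattice_def by (auto intro!: exI[of _ "\<lambda>_. 0"])

lemma lattice_iff: "x \<in> lattice b \<longleftrightarrow> (\<exists>k. x = (\<Sum>i\<in>UNIV. of_int (k i) *\<^sub>R b i))"
  unfolding lattice_def by blast

lemma lat_add: "x \<in> lattice b \<Longrightarrow> y \<in> lattice b \<Longrightarrow> x + y \<in> lattice b"
proof -
  assume "x \<in> lattice b" "y \<in> lattice b"
  then obtain k k' where "x = (\<Sum>i\<in>UNIV. of_int (k i) *\<^sub>R b i)" "y = (\<Sum>i\<in>UNIV. of_int (k' i) *\<^sub>R b i)"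
    unfolding lattice_iff by blast
  then have "x + y = (\<Sum>i\<in>UNIV. of_int (k i + k' i) *\<^sub>R b i)"
    by (simp add: scaleR_add_left sum.distrib)
  then show ?thesis unfolding lattice_iff by (intro exI[of _ "\<lambda>i. k i + k' i"])
qed

lemma lat_uminus: "x \<in> lattice b \<Longrightarrow> - x \<in> lattice b"
proof -
  assume "x \<in> lattice b"
  then obtain k where "x = (\<Sum>i\<in>UNIV. of_int (k i) *\<^sub>R b i)"
    unfolding lattice_iff by blast
  then have "- x = (\<Sum>i\<in>UNIV. of_int (- k i) *\<^sub>R b i)"
    by (simp add: sum_negf)
  then show ?thesis unfolding lattice_iff by (intro exI[of _ "\<lambda>i. - k i"])
qed

lemma lat_diff: "x \<in> lattice b \<Longrightarrow> y \<in> lattice b \<Longrightarrow> x - y \<in> lattice b"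
  using lat_add[of x b "-y"] lat_uminus[of y b] by simp

definition bmap :: "('n::finite \<Rightarrow> real^'n) \<Rightarrow> real^'n \<Rightarrow> real^'n" where
  "bmap b c = (\<Sum>i\<in>UNIV. c $ i *\<^sub>R b i)"

lemma linear_bmap: "linear (bmap b)"
  by (rule linearI) (auto simp: bmap_def scaleR_add_left sum.distrib scaleR_sum_right)

lemma bmap_inj0: "lattice_basis b \<Longrightarrow> bmap b c = 0 \<Longrightarrow> c = 0"
  unfolding lattice_basis_def bmap_def
  by (auto simp: vec_eq_iff dest!: spec[of _ "\<lambda>i. c $ i"])

lemma lat_discrete:
  fixes b :: "'n::finite \<Rightarrow> real^'n"
  assumes "lattice_basis b"
  shows "\<exists>D>0. \<forall>l\<in>lattice b. l \<noteq> 0 \<longrightarrow> D \<le> norm l"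
proof -
  have bl: "bounded_linear (bmap b)"
    using linear_bmap linear_conv_bounded_linear by blast
  obtain e where e: "e > 0" "\<forall>x\<in>UNIV. e * norm x \<le> norm (bmap b x)"
    using injective_imp_isometric[OF closed_UNIV subspace_UNIV bl] bmap_inj0[OF assms] by blast
  have "e \<le> norm l" if lL: "l \<in> lattice b" and l0: "l \<noteq> 0" for l
  proof -
    obtain k where k: "l = (\<Sum>i\<in>UNIV. of_int (k i) *\<^sub>R b i)"
      using lL unfolding lattice_iff by blast
    define c :: "real^'n" where "c = (\<chi> i. of_int (k i))"
    have lc: "l = bmap b c" unfolding k bmap_def c_def by simp
    have "c \<noteq> 0" using l0 lc by (auto simp: bmap_def)
    then obtain i where "c $ i \<noteq> 0" by (auto simp: vec_eq_iff)
    then have "k i \<noteq> 0" by (simp add: c_def)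
    then have "1 \<le> \<bar>c $ i\<bar>" by (simp add: c_def)
    also have "\<dots> \<le> norm c" by (rule component_le_norm_cart)
    finally have "e \<le> e * norm c" using e(1) by simp
    also have "\<dots> \<le> norm l" using e(2) lc by simp
    finally show ?thesis .
  qed
  with e(1) show ?thesis by blast
qed


lemma exp2: fixes a b :: "'a::real_inner"
  shows "norm (a - b)^2 = norm a^2 + norm b^2 - 2 * inner a b"
  by (simp add: power2_norm_eq_inner inner_diff_left inner_diff_right inner_commute)

lemma exp3: fixes a b c :: "'a::real_inner"
  shows "norm (a - b - c)^2 = norm a^2 + norm b^2 + norm c^2 - 2 * inner a b - 2 * inner a c + 2 * inner b c"
  by (simp add: power2_norm_eq_inner inner_diff_left inner_diff_right inner_commute)

lemma iso_ball_lin: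
  fixes L :: "'a::real_inner \<Rightarrow> 'a"
  assumes r: "r > 0" and L0: "L 0 = 0"
    and iso: "\<And>u v. norm u < r \<Longrightarrow> norm v < r \<Longrightarrow> norm (L u - L v) = norm (u - v)"
  shows "\<exists>A. linear A \<and> (\<forall>v. norm v < r \<longrightarrow> A v = L v)"
proof -
  have nrm: "norm (L u) = norm u" if "norm u < r" for u
    using iso[of u 0] that r L0 by simp
  have inn: "inner (L u) (L v) = inner u v" if "norm u < r" "norm v < r" for u v
  proof -
    have "norm (L u - L v)^2 = norm (u - v)^2" using iso that by simp
    then show ?thesis unfolding exp2 using nrm that by simp
  qed
  have add: "L (u + v) = L u + L v" if "norm u < r" "norm v < r" "norm (u + v) < r" for u v
  proof -
    have "norm (L (u+v) - L u - L v)^2 = norm (L(u+v))^2 + norm (L u)^2 + norm(L v)^2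
        - 2*inner (L(u+v)) (L u) - 2*inner (L(u+v)) (L v) + 2*inner (L u) (L v)" by (rule exp3)
    also have "\<dots> = norm (u+v)^2 + norm u^2 + norm v^2 - 2*inner (u+v) u - 2*inner (u+v) v + 2*inner u v"
      using nrm inn that by simp
    also have "\<dots> = norm ((u+v) - u - v)^2" by (rule exp3[symmetric])
    finally have "norm (L (u+v) - L u - L v) = 0" by simp
    then show ?thesis by (simp add: algebra_simps)
  qed
  have hom: "L (t *\<^sub>R v) = t *\<^sub>R L v" if "norm v < r" "\<bar>t\<bar> \<le> 1" for v t
  proof -
    have tv: "norm (t *\<^sub>R v) < r"
    proof -
      have "norm (t *\<^sub>R v) = \<bar>t\<bar> * norm v" by simp
      also have "\<dots> \<le> norm v" using that(2) by (simp add: mult_left_le_one_le)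
      finally show ?thesis using that(1) by simp
    qed
    have "norm (L (t *\<^sub>R v) - t *\<^sub>R L v)^2 = norm (L (t *\<^sub>R v))^2 + norm (t *\<^sub>R L v)^2 - 2 * inner (L (t *\<^sub>R v)) (t *\<^sub>R L v)"
      by (rule exp2)
    also have "\<dots> = norm (t *\<^sub>R v)^2 + norm (t *\<^sub>R v)^2 - 2 * inner (t *\<^sub>R v) (t *\<^sub>R v)"
      using nrm[OF tv] nrm[OF that(1)] inn[OF tv that(1)] by (simp add: inner_scaleR_right)
    also have "\<dots> = norm (t *\<^sub>R v - t *\<^sub>R v)^2" by (rule exp2[symmetric])
    finally have "norm (L (t *\<^sub>R v) - t *\<^sub>R L v) = 0" by simp
    then show ?thesis by simp
  qed
  have aux: "(1/t1) *\<^sub>R L (t1 *\<^sub>R x) = (1/t2) *\<^sub>R L (t2 *\<^sub>R x)"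
    if "0 < t1" "t1 \<le> t2" "norm (t2 *\<^sub>R x) < r" for t1 t2 x
  proof -
    have "L (t1 *\<^sub>R x) = L ((t1/t2) *\<^sub>R (t2 *\<^sub>R x))" using that by simp
    also have "\<dots> = (t1/t2) *\<^sub>R L (t2 *\<^sub>R x)" using that by (intro hom) auto
    finally show ?thesis using that by simp
  qed
  define s where "s x = r / (2 * (norm x + 1))" for x :: 'a
  have s_pos: "s x > 0" for x unfolding s_def using r
    by (intro divide_pos_pos) (auto intro: add_nonneg_pos)
  have s_small: "norm (s x *\<^sub>R x) < r" for x
  proof -
    have "norm (s x *\<^sub>R x) = r * norm x / (2 * (norm x + 1))"
      using s_pos[of x] r by (simp add: s_def)
    also have "\<dots> < r" using r by (simp add: divide_less_eq add_pos_nonneg) (smt (verit) norm_ge_zero)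
    finally show ?thesis .
  qed
  define A where "A x = (1 / s x) *\<^sub>R L (s x *\<^sub>R x)" for x
  have key: "A x = (1/t) *\<^sub>R L (t *\<^sub>R x)" if "0 < t" "norm (t *\<^sub>R x) < r" for t x
  proof (cases "t \<le> s x")
    case True
    then show ?thesis unfolding A_def using aux[of t "s x" x, OF that(1) True s_small] by simp
  next
    case False
    then show ?thesis using False by (simp add: A_def aux[of "s x" t x, OF s_pos _ that(2)])
  qed
  have lin: "linear A"
  proof (rule linearI)
    fix x y :: 'a
    define t where "t = r / (2 * (norm x + norm y + 1))"
    have t: "t > 0" unfolding t_def using r
      by (intro divide_pos_pos) (auto intro!: mult_pos_pos add_nonneg_pos)
    have pos: "norm x + norm y + 1 > 0" by (auto intro: add_nonneg_pos)
    have "t * (norm x + norm y + 1) = r / 2" unfolding t_def using pos by (simp add: field_simps)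
    then have tb: "t * (norm x + norm y + 1) < r" using r by simp
    have n1: "norm (t *\<^sub>R x) < r"
    proof -
      have "t * norm x \<le> t * (norm x + norm y + 1)" using t by (intro mult_left_mono) auto
      then have "t * norm x < r" using tb by linarith
      then show ?thesis using t by simp
    qed
    have n2: "norm (t *\<^sub>R y) < r"
    proof -
      have "t * norm y \<le> t * (norm x + norm y + 1)" using t by (intro mult_left_mono) auto
      then have "t * norm y < r" using tb by linarith
      then show ?thesis using t by simp
    qed
    have n3: "norm (t *\<^sub>R (x + y)) < r"
    proof -
      have "t * norm (x + y) \<le> t * (norm x + norm y + 1)" using t norm_triangle_ineq[of x y]
        by (intro mult_left_mono) auto
      then have "t * norm (x + y) < r" using tb by linarith
      then show ?thesis using t by simp
    qed
    show "A (x + y) = A x + A y"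
      using key[OF t n1] key[OF t n2] key[OF t n3] t add[OF n1 n2] n3 by (simp add: scaleR_add_right)
  next
    fix c and x :: 'a
    show "A (c *\<^sub>R x) = c *\<^sub>R A x"
    proof (cases "c = 0")
      case True
      then show ?thesis unfolding A_def using L0 by simp
    next
      case False
      define t where "t = r / (2 * (norm x + 1) * (\<bar>c\<bar> + 1))"
      have t: "t > 0" unfolding t_def using r
      by (intro divide_pos_pos) (auto intro!: mult_pos_pos add_nonneg_pos)
      have pos: "(norm x + 1) * (\<bar>c\<bar> + 1) > 0"
        by (intro mult_pos_pos) (auto intro: add_nonneg_pos)
      have "t * ((norm x + 1) * (\<bar>c\<bar> + 1)) = r / 2" unfolding t_def using pos by (simp add: field_simps)
      then have tb: "t * ((norm x + 1) * (\<bar>c\<bar> + 1)) < r" using r by simp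
      have tx: "norm (t *\<^sub>R x) < r"
      proof -
        have "norm x + 1 \<le> (norm x + 1) * (\<bar>c\<bar> + 1)"
          using mult_left_mono[of 1 "\<bar>c\<bar> + 1" "norm x + 1"] by simp
        then have "norm x \<le> (norm x + 1) * (\<bar>c\<bar> + 1)" by linarith
        then have "t * norm x \<le> t * ((norm x + 1) * (\<bar>c\<bar> + 1))" using t by (intro mult_left_mono) auto
        then have "t * norm x < r" using tb by linarith
        then show ?thesis using t by simp
      qed
      have tcx: "norm (t *\<^sub>R c *\<^sub>R x) < r"
      proof -
        have "\<bar>c\<bar> * norm x \<le> (\<bar>c\<bar> + 1) * (norm x + 1)"
          by (intro mult_mono) auto
        then have "\<bar>c\<bar> * norm x \<le> (norm x + 1) * (\<bar>c\<bar> + 1)" by (simp add: mult.commute)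
        then have "t * (\<bar>c\<bar> * norm x) \<le> t * ((norm x + 1) * (\<bar>c\<bar> + 1))" using t by (intro mult_left_mono) auto
        then have "t * (\<bar>c\<bar> * norm x) < r" using tb by linarith
        then show ?thesis using t by (simp add: abs_mult mult.assoc)
      qed
      have Leq: "L (t *\<^sub>R c *\<^sub>R x) = c *\<^sub>R L (t *\<^sub>R x)"
      proof (cases "\<bar>c\<bar> \<le> 1")
        case True
        have "L (t *\<^sub>R c *\<^sub>R x) = L (c *\<^sub>R (t *\<^sub>R x))" by (simp add: ac_simps)
        also have "\<dots> = c *\<^sub>R L (t *\<^sub>R x)" using hom[OF tx True] .
        finally show ?thesis .
      next
        case gt: False
        have "L (t *\<^sub>R x) = L ((1/c) *\<^sub>R (t *\<^sub>R c *\<^sub>R x))" using False by simp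
        also have "\<dots> = (1/c) *\<^sub>R L (t *\<^sub>R c *\<^sub>R x)" using gt by (intro hom[OF tcx]) simp
        finally show ?thesis using False by simp
      qed
      show ?thesis
        unfolding key[OF t tcx] key[OF t tx] Leq by simp
    qed
  qed
  have "A v = L v" if "norm v < r" for v using key[of 1 v] that by simp
  with lin show ?thesis by blast
qed


lemma tdist_eq:
  fixes b :: "'n::finite \<Rightarrow> real^'n"
  assumes disc: "\<forall>l\<in>lattice b. l \<noteq> 0 \<longrightarrow> D \<le> norm l" and l0: "l0 \<in> lattice b"
    and sm: "norm (x - y - l0) < D/2"
  shows "tdist b x y = norm (x - y - l0)"
  unfolding tdist_def
proof (rule cInf_eq_minimum)
  show "norm (x - y - l0) \<in> (\<lambda>l. norm (x - y - l)) ` lattice b" using l0 by blast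
next
  fix z assume "z \<in> (\<lambda>l. norm (x - y - l)) ` lattice b"
  then obtain l where l: "l \<in> lattice b" "z = norm (x - y - l)" by blast
  show "norm (x - y - l0) \<le> z"
  proof (cases "l = l0")
    case True then show ?thesis using l by simp
  next
    case False
    have "D \<le> norm (l - l0)" using disc lat_diff[OF l(1) l0] False by auto
    also have "l - l0 = (x - y - l0) - (x - y - l)" by simp
    finally have "D \<le> norm (x - y - l0) + norm (x - y - l)"
      using norm_triangle_ineq4[of "x - y - l0" "x - y - l"] by linarith
    then show ?thesis using sm l by linarith
  qed
qed

lemma tdist_small:
  fixes b :: "'n::finite \<Rightarrow> real^'n"
  assumes "tdist b x y < e"
  shows "\<exists>l0\<in>lattice b. norm (x - y - l0) < e"
proof -
  have ne: "(\<lambda>l. norm (x - y - l)) ` lattice b \<noteq> {}" using lat_0 by blast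
  have bdd: "bdd_below ((\<lambda>l. norm (x - y - l)) ` lattice b)" by (rule bdd_belowI[of _ 0]) auto
  show ?thesis using assms unfolding tdist_def cInf_less_iff[OF ne bdd] by blast
qed

lemma tdist_lat:
  fixes b :: "'n::finite \<Rightarrow> real^'n"
  assumes "x - y \<in> lattice b"
  shows "tdist b x y = 0"
  unfolding tdist_def
proof (rule cInf_eq_minimum)
  show "0 \<in> (\<lambda>l. norm (x - y - l)) ` lattice b" using assms by force
qed auto

lemma tdist_zero:
  fixes b :: "'n::finite \<Rightarrow> real^'n"
  assumes disc: "\<forall>l\<in>lattice b. l \<noteq> 0 \<longrightarrow> D \<le> norm l" and D: "D > 0" and t: "tdist b x y = 0"
  shows "x - y \<in> lattice b"
proof -
  obtain l0 where l0: "l0 \<in> lattice b" "norm (x - y - l0) < D/2"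
    using tdist_small[of b x y "D/2"] t D by auto
  have "norm (x - y - l0) = 0" using tdist_eq[OF disc l0] t by simp
  then show ?thesis using l0 by simp
qed

lemma unique_rep:
  fixes b :: "'n::finite \<Rightarrow> real^'n"
  assumes disc: "\<forall>l\<in>lattice b. l \<noteq> 0 \<longrightarrow> D \<le> norm l"
    and "p - w \<in> lattice b" "p - w' \<in> lattice b" "norm w + norm w' < D"
  shows "w = w'"
proof (rule ccontr)
  assume ne: "w \<noteq> w'"
  have "w' - w \<in> lattice b" using lat_diff[OF assms(2,3)] by simp
  then have "D \<le> norm (w' - w)" using disc ne by auto
  also have "\<dots> \<le> norm w' + norm w" by (rule norm_triangle_ineq4)
  finally show False using assms(4) by linarith
qed

lemma small_step:
  fixes x :: "'a::real_normed_vector"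
  assumes "\<rho> > 0"
  shows "\<exists>N::nat. N > 0 \<and> norm ((1 / real N) *\<^sub>R x) < \<rho> \<and> x = real N *\<^sub>R ((1 / real N) *\<^sub>R x)"
proof -
  obtain N :: nat where N: "norm x / \<rho> < real N" using reals_Archimedean2 by blast
  have Np: "N > 0" using N assms by (metis divide_nonneg_pos norm_ge_zero not_less of_nat_0 of_nat_le_iff not_gr_zero order.strict_trans2 le_refl)
  have "norm x < \<rho> * real N" using N assms by (simp add: divide_less_eq mult.commute)
  then have "norm ((1 / real N) *\<^sub>R x) < \<rho>" using Np by (simp add: divide_less_eq mult.commute)
  moreover have "x = real N *\<^sub>R ((1 / real N) *\<^sub>R x)" using Np by simp
  ultimately show ?thesis using Np by blast
qed

lemma torus_iso_affine:
  fixes b :: "'n::finite \<Rightarrow> real^'n" and f :: "real^'n \<Rightarrow> real^'n"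
  assumes disc: "\<forall>l\<in>lattice b. l \<noteq> 0 \<longrightarrow> D \<le> norm l" and D: "D > 0"
    and iso: "\<forall>x y. tdist b (f x) (f y) = tdist b x y"
  shows "\<exists>A c. linear A \<and> (\<forall>l\<in>lattice b. A l \<in> lattice b) \<and> (\<forall>x. f x - (A x + c) \<in> lattice b)"
proof -
  define r where "r = D/4"
  have r: "r > 0" using D by (simp add: r_def)
  define L where "L x v = (SOME w. f (x + v) - f x - w \<in> lattice b \<and> norm w = norm v)" for x v
  have Lp: "f (x + v) - f x - L x v \<in> lattice b \<and> norm (L x v) = norm v" if hv: "norm v < D/2" for x v
  proof -
    have "tdist b (x + v) x = norm v" using tdist_eq[OF disc lat_0, of "x+v" x] hv by simp
    then have tv: "tdist b (f (x+v)) (f x) = norm v" using iso by simp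
    then obtain l0 where l0: "l0 \<in> lattice b" "norm (f (x+v) - f x - l0) < D/2"
      using tdist_small[of b "f (x+v)" "f x" "D/2"] hv tv by auto
    have "tdist b (f (x+v)) (f x) = norm (f (x+v) - f x - l0)" using tdist_eq[OF disc l0] .
    then have "\<exists>w. f (x + v) - f x - w \<in> lattice b \<and> norm w = norm v"
      using tv l0 by (intro exI[of _ "f (x+v) - f x - l0"]) simp
    then show ?thesis unfolding L_def by (rule someI_ex)
  qed
  have Liso: "norm (L x u - L x v) = norm (u - v)" if "norm u < r" "norm v < r" for x u v
  proof -
    have u: "norm u < D/2" and v: "norm v < D/2" using that D by (auto simp: r_def)
    note pu = Lp[OF u, of x] and pv = Lp[OF v, of x]
    have m: "(f (x+u) - f (x+v)) - (L x u - L x v) \<in> lattice b"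
      using lat_diff[OF pu[THEN conjunct1] pv[THEN conjunct1]] by (simp add: algebra_simps)
    have "norm (L x u - L x v) \<le> norm (L x u) + norm (L x v)" by (rule norm_triangle_ineq4)
    then have "norm (f (x+u) - f (x+v) - (f (x+u) - f (x+v) - (L x u - L x v))) < D/2"
      using pu pv that by (simp add: r_def)
    then have "tdist b (f (x+u)) (f (x+v)) = norm (L x u - L x v)"
      using tdist_eq[OF disc m] by simp
    moreover have "tdist b (x+u) (x+v) = norm (u - v)"
    proof -
      have "norm (u - v) \<le> norm u + norm v" by (rule norm_triangle_ineq4)
      then show ?thesis using tdist_eq[OF disc lat_0, of "x+u" "x+v"] that by (simp add: r_def)
    qed
    ultimately show ?thesis using iso by metis
  qed
  have L0: "L x 0 = 0" for x using Lp[of 0 x] D by simp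
  have lin: "\<exists>A. linear A \<and> (\<forall>v. norm v < r \<longrightarrow> A v = L x v)" for x
    using iso_ball_lin[of r "L x"] L0 Liso r by blast
  have Ladd: "L x (u + v) = L x u + L x v" if "norm u < r" "norm v < r" "norm (u+v) < r" for x u v
  proof -
    obtain A where A: "linear A" "\<forall>v. norm v < r \<longrightarrow> A v = L x v" using lin by blast
    show ?thesis using A that linear_add[OF A(1), of u v] by simp
  qed
  have Lconst: "L (x + u) v = L x v" if "norm u < r/2" "norm v < r/2" for x u v
  proof -
    have uv: "norm (u + v) < r" using norm_triangle_ineq[of u v] that by simp
    have u': "norm u < D/2" "norm v < D/2" "norm (u+v) < D/2" using that uv r by (auto simp: r_def)
    have 1: "(f (x + u + v) - f (x + u)) - L (x+u) v \<in> lattice b" using Lp[OF u'(2), of "x+u"] by simp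
    have e: "(f (x + u + v) - f (x + u)) - L x v
        = (f (x + (u+v)) - f x - L x (u+v)) - (f (x + u) - f x - L x u)"
      using Ladd[of u v x] that uv r by (simp add: algebra_simps)
    have 2: "(f (x + u + v) - f (x + u)) - L x v \<in> lattice b"
      unfolding e by (rule lat_diff[OF Lp[OF u'(3), of x, THEN conjunct1] Lp[OF u'(1), of x, THEN conjunct1]])
    have "norm (L (x+u) v) + norm (L x v) < D"
      using Lp[OF u'(2), of "x+u"] Lp[OF u'(2), of x] that by (simp add: r_def, smt (verit) norm_ge_zero)
    then show ?thesis using unique_rep[OF disc 1 2] by simp
  qed
  have Lglob: "L x v = L 0 v" if "norm v < r/2" for x v
  proof -
    obtain N :: nat where N: "N > 0" "norm ((1 / real N) *\<^sub>R x) < r/2" "x = real N *\<^sub>R ((1 / real N) *\<^sub>R x)"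
      using small_step[of "r/2" x] r by auto
    define w where "w = (1 / real N) *\<^sub>R x"
    have "L (real k *\<^sub>R w) v = L 0 v" for k
    proof (induction k)
      case 0 then show ?case by simp
    next
      case (Suc k)
      have "real (Suc k) *\<^sub>R w = real k *\<^sub>R w + w" by (simp add: scaleR_add_left)
      moreover have "norm w < r/2" using N(2) w_def by simp
      ultimately show ?case using Lconst[of w v "real k *\<^sub>R w"] that Suc by simp
    qed
    then show ?thesis using N(3) w_def by metis
  qed
  obtain A where A: "linear A" "\<forall>v. norm v < r \<longrightarrow> A v = L 0 v" using lin by blast
  have step: "f (x + u) - f x - A u \<in> lattice b" if "norm u < r/2" for x u
  proof -
    have "norm u < D/2" using that r by (simp add: r_def)
    moreover have "norm u < r" using that r norm_ge_zero[of u] by linarith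
    ultimately show ?thesis using Lp[of u x] Lglob[OF that, of x] A(2) by simp
  qed
  have glob: "f x - f 0 - A x \<in> lattice b" for x
  proof -
    obtain N :: nat where N: "N > 0" "norm ((1 / real N) *\<^sub>R x) < r/2" "x = real N *\<^sub>R ((1 / real N) *\<^sub>R x)"
      using small_step[of "r/2" x] r by auto
    define w where "w = (1 / real N) *\<^sub>R x"
    have "f (real k *\<^sub>R w) - f 0 - A (real k *\<^sub>R w) \<in> lattice b" for k
    proof (induction k)
      case 0 then show ?case using lat_0 linear_0[OF A(1)] by simp
    next
      case (Suc k)
      have e: "real (Suc k) *\<^sub>R w = real k *\<^sub>R w + w" by (simp add: scaleR_add_left)
      have "f (real k *\<^sub>R w + w) - f 0 - A (real k *\<^sub>R w + w)
          = (f (real k *\<^sub>R w) - f 0 - A (real k *\<^sub>R w)) + (f (real k *\<^sub>R w + w) - f (real k *\<^sub>R w) - A w)"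
        using linear_add[OF A(1)] by (simp add: algebra_simps)
      have wn: "norm w < r/2" using N(2) w_def by simp
      have "(f (real k *\<^sub>R w) - f 0 - A (real k *\<^sub>R w)) + (f (real k *\<^sub>R w + w) - f (real k *\<^sub>R w) - A w) \<in> lattice b"
        by (rule lat_add[OF Suc step[OF wn]])
      then show ?case unfolding e using linear_add[OF A(1), of "real k *\<^sub>R w" w] by (simp add: algebra_simps)
    qed
    then show ?thesis using N(3) w_def by metis
  qed
  have Alat: "A l \<in> lattice b" if "l \<in> lattice b" for l
  proof -
    have "tdist b (f l) (f 0) = 0" using iso tdist_lat[of l 0 b] that by simp
    then have "f l - f 0 \<in> lattice b" using tdist_zero[OF disc D] by blast
    from lat_diff[OF this glob[of l]] show ?thesis by simp
  qed
  have "\<forall>x. f x - (A x + f 0) \<in> lattice b" using glob by (simp add: algebra_simps)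
  then show ?thesis using A(1) Alat by blast
qed


definition cmk :: "real^'n \<Rightarrow> real^'n \<Rightarrow> complex^'n" where
  "cmk x y = (\<chi> j. complex_of_real (x$j) + \<i> * complex_of_real (y$j))"
definition Rev :: "complex^'n \<Rightarrow> real^'n" where "Rev z = (\<chi> j. Re (z$j))"
definition Imv :: "complex^'n \<Rightarrow> real^'n" where "Imv z = (\<chi> j. Im (z$j))"
definition Cx :: "(real^'n \<Rightarrow> real^'n) \<Rightarrow> complex^'n \<Rightarrow> complex^'n" where
  "Cx A z = cmk (A (Rev z)) (A (Imv z))"

lemma Rev_cmk[simp]: "Rev (cmk x y) = x" by (simp add: Rev_def cmk_def vec_eq_iff)
lemma Imv_cmk[simp]: "Imv (cmk x y) = y" by (simp add: Imv_def cmk_def vec_eq_iff)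
lemma cmk_RI: "cmk (Rev z) (Imv z) = z" by (simp add: Rev_def Imv_def cmk_def vec_eq_iff complex_eq_iff)
lemma Rev_add[simp]: "Rev (z + w) = Rev z + Rev w" by (simp add: Rev_def vec_eq_iff)
lemma Imv_add[simp]: "Imv (z + w) = Imv z + Imv w" by (simp add: Imv_def vec_eq_iff)
lemma Rev_diff[simp]: "Rev (z - w) = Rev z - Rev w" by (simp add: Rev_def vec_eq_iff)
lemma Imv_diff[simp]: "Imv (z - w) = Imv z - Imv w" by (simp add: Imv_def vec_eq_iff)
lemma Rev_scaleR[simp]: "Rev (r *\<^sub>R z) = r *\<^sub>R Rev z" by (simp add: Rev_def vec_eq_iff)
lemma Imv_scaleR[simp]: "Imv (r *\<^sub>R z) = r *\<^sub>R Imv z" by (simp add: Imv_def vec_eq_iff)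
lemma cmk_add: "cmk x y + cmk x' y' = cmk (x + x') (y + y')"
  by (simp add: cmk_def vec_eq_iff algebra_simps)
lemma cmk_diff: "cmk x y - cmk x' y' = cmk (x - x') (y - y')"
  by (simp add: cmk_def vec_eq_iff algebra_simps)
lemma embC_cmk: "embC x = cmk x 0" by (simp add: embC_def cmk_def vec_eq_iff)
lemma embC_add: "embC (x + y) = embC x + embC y" by (simp add: embC_def vec_eq_iff)
lemma embC_diff: "embC (x - y) = embC x - embC y" by (simp add: embC_def vec_eq_iff)

lemma Cx_add: "linear A \<Longrightarrow> Cx A (z + w) = Cx A z + Cx A w"
  by (simp add: Cx_def linear_add cmk_add)
lemma Cx_diff: "linear A \<Longrightarrow> Cx A (z - w) = Cx A z - Cx A w"
  by (simp add: Cx_def linear_diff cmk_diff)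
lemma Cx_embC: "linear A \<Longrightarrow> Cx A (embC x) = embC (A x)"
  by (simp add: Cx_def embC_cmk linear_0)
lemma Cx_comp: "Cx A (Cx B z) = Cx (A \<circ> B) z"
  by (simp add: Cx_def)
lemma Cx_id: "Cx id z = z"
  by (simp add: Cx_def cmk_RI)

lemma Cx_cmult:
  assumes A: "linear A"
  shows "Cx A (\<chi> j. c * v $ j) = (\<chi> j. c * Cx A v $ j)"
proof -
  have R: "Rev (\<chi> j. c * v $ j) = Re c *\<^sub>R Rev v - Im c *\<^sub>R Imv v"
    by (simp add: Rev_def Imv_def vec_eq_iff)
  have I: "Imv (\<chi> j. c * v $ j) = Re c *\<^sub>R Imv v + Im c *\<^sub>R Rev v"
    by (simp add: Rev_def Imv_def vec_eq_iff)
  show ?thesis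
    unfolding Cx_def R I
    by (simp add: linear_diff[OF A] linear_add[OF A] linear_scale[OF A] cmk_def vec_eq_iff complex_eq_iff)
qed

lemma Cx_linear: "linear A \<Longrightarrow> linear (Cx A)"
  by (rule linearI) (simp_all add: Cx_add, simp add: Cx_def linear_scale cmk_def vec_eq_iff complex_eq_iff)

lemma Cx_holo:
  assumes A: "linear A" and S: "open S"
  shows "cvec_holomorphic_on (\<lambda>z. Cx A z + C) S"
  unfolding cvec_holomorphic_on_def
proof (intro conjI S ballI exI)
  fix z
  have bl: "bounded_linear (Cx A)" using Cx_linear[OF A] linear_conv_bounded_linear by blast
  show "((\<lambda>z. Cx A z + C) has_derivative Cx A) (at z)"
    using has_derivative_add_const[OF bounded_linear_imp_has_derivative[OF bl]] by simp
  show "\<forall>c v. Cx A (\<chi> j. c * v $ j) = (\<chi> j. c * Cx A v $ j)" using Cx_cmult[OF A] by blast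
qed


definition cline :: "complex^'n \<Rightarrow> complex^'n \<Rightarrow> complex \<Rightarrow> complex^'n" where
  "cline X Y t = (\<chi> k. X$k + t * Y$k)"

lemma bl_line: "bounded_linear (\<lambda>s::complex. (\<chi> k. s * Y$k) :: complex^'n)"
proof -
  have "linear (\<lambda>s::complex. (\<chi> k. s * Y$k) :: complex^'n)"
    by (rule linearI)
      (unfold vec_eq_iff vector_scaleR_component vector_add_component vec_lambda_beta,
       auto simp: scaleR_conv_of_real algebra_simps)
  then show ?thesis using linear_conv_bounded_linear by blast
qed

lemma cline_deriv: "(cline X Y has_derivative (\<lambda>s. \<chi> k. s * Y$k)) (at t)"
proof -
  have e: "cline X Y = (\<lambda>t. X + (\<chi> k. t * Y$k))" by (auto simp: cline_def vec_eq_iff)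
  show ?thesis unfolding e
    using has_derivative_add[OF has_derivative_const[of X] bounded_linear_imp_has_derivative[OF bl_line]]
    by simp
qed

lemma holo_comp_line:
  fixes h :: "complex^'n \<Rightarrow> complex^'n"
  assumes "cvec_holomorphic_on h B"
  shows "(\<lambda>t. h (cline X Y t) $ j) holomorphic_on {t. cline X Y t \<in> B}"
  unfolding holomorphic_on_def
proof
  fix t assume t: "t \<in> {t. cline X Y t \<in> B}"
  have B: "open B" using assms unfolding cvec_holomorphic_on_def by blast
  obtain L where L: "(h has_derivative L) (at (cline X Y t))" "\<forall>c v. L (\<chi> j. c * v $ j) = (\<chi> j. c * L v $ j)"
    using assms t unfolding cvec_holomorphic_on_def by blast
  have "((h \<circ> cline X Y) has_derivative (L \<circ> (\<lambda>s. \<chi> k. s * Y$k))) (at t)"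
    by (rule diff_chain_at[OF cline_deriv L(1)])
  then have "((\<lambda>t. (h \<circ> cline X Y) t $ j) has_derivative (\<lambda>s. (L \<circ> (\<lambda>s. \<chi> k. s * Y$k)) s $ j)) (at t)"
    by (rule bounded_linear.has_derivative[OF bounded_linear_vec_nth])
  moreover have "(\<lambda>s. (L \<circ> (\<lambda>s. \<chi> k. s * Y$k)) s $ j) = (*) (L Y $ j)"
    using L(2) by (auto simp: fun_eq_iff mult.commute)
  ultimately have "((\<lambda>t. h (cline X Y t) $ j) has_field_derivative (L Y $ j)) (at t)"
    unfolding has_field_derivative_def by (simp add: o_def)
  then show "(\<lambda>t. h (cline X Y t) $ j) field_differentiable at t within {t. cline X Y t \<in> B}"
    unfolding field_differentiable_def using has_field_derivative_at_within by blast
qed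

lemma holo_const_seg:
  fixes g :: "complex \<Rightarrow> complex"
  assumes hol: "g holomorphic_on U" and U: "open U" "connected U"
    and e: "\<epsilon> > 0" and seg: "\<forall>r\<in>{0..\<epsilon>}. t1 + of_real r \<in> U \<and> g (t1 + of_real r) \<in> C"
    and C: "countable C" and t: "t \<in> U"
  shows "g t = g t1"
proof -
  define \<sigma> where "\<sigma> r = t1 + complex_of_real r" for r
  have sU: "\<sigma> ` {0..\<epsilon>} \<subseteq> U" using seg by (auto simp: \<sigma>_def)
  have cont: "continuous_on {0..\<epsilon>} (g \<circ> \<sigma>)"
  proof (rule continuous_on_compose)
    show "continuous_on {0..\<epsilon>} \<sigma>" unfolding \<sigma>_def by (intro continuous_intros)
    show "continuous_on (\<sigma> ` {0..\<epsilon>}) g"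
      using holomorphic_on_imp_continuous_on[OF hol] sU continuous_on_subset by blast
  qed
  have conn: "connected ((g \<circ> \<sigma>) ` {0..\<epsilon>})" by (rule connected_continuous_image[OF cont connected_Icc])
  have "(g \<circ> \<sigma>) ` {0..\<epsilon>} \<subseteq> C" using seg by (auto simp: \<sigma>_def)
  then have "countable ((g \<circ> \<sigma>) ` {0..\<epsilon>})" using C countable_subset by blast
  then obtain a where a: "(g \<circ> \<sigma>) ` {0..\<epsilon>} \<subseteq> {a}"
    using connected_card_eq_iff_nontrivial[OF conn] by (meson countable_finite uncountable_infinite)
  have ga: "g (\<sigma> r) = g t1" if "r \<in> {0..\<epsilon>}" for r
  proof -
    have "r \<in> {0..\<epsilon>}" "0 \<in> {0..\<epsilon>}" using that e by auto
    then have "g (\<sigma> r) = a" "g (\<sigma> 0) = a" using a by (auto simp: image_subset_iff)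
    then show ?thesis by (simp add: \<sigma>_def)
  qed
  have t1U: "t1 \<in> U" using seg e by (metis add.right_neutral atLeastAtMost_iff less_eq_real_def of_real_0 order_refl)
  have hol': "(\<lambda>z. g z - g t1) holomorphic_on U" using hol by (intro holomorphic_intros)
  have sub: "\<sigma> ` {0<..\<epsilon>} \<subseteq> U" using sU by auto
  have z0: "\<And>z. z \<in> \<sigma> ` {0<..\<epsilon>} \<Longrightarrow> g z - g t1 = 0" using ga by auto
  have lim: "t1 islimpt \<sigma> ` {0<..\<epsilon>}"
      unfolding islimpt_approachable
    proof (intro allI impI)
      fix d :: real assume d: "d > 0"
      define r where "r = min \<epsilon> (d/2)"
      have r: "r > 0" "r \<le> \<epsilon>" "r < d" using d e by (auto simp: r_def)
      have "\<sigma> r \<in> \<sigma> ` {0<..\<epsilon>}" using r by auto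
      moreover have "\<sigma> r \<noteq> t1" using r by (simp add: \<sigma>_def)
      moreover have "dist (\<sigma> r) t1 < d" using r by (simp add: \<sigma>_def dist_norm)
      ultimately show "\<exists>x'\<in>\<sigma> ` {0<..\<epsilon>}. x' \<noteq> t1 \<and> dist x' t1 < d" by blast
    qed
  have "g t - g t1 = 0"
    by (rule analytic_continuation[of "\<lambda>z. g z - g t1" U "\<sigma> ` {0<..\<epsilon>}" t1 t, OF hol' U sub t1U lim z0 t])
  then show ?thesis by simp
qed


lemma uniq_main:
  fixes P Q :: "complex^'n \<Rightarrow> complex^'n" and Cl :: "(complex^'n) set"
  assumes Clc: "countable Cl"
    and Cld: "\<And>a b. a \<in> Cl \<Longrightarrow> b \<in> Cl \<Longrightarrow> a - b \<in> Cl"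
    and Cla: "\<And>a b. a \<in> Cl \<Longrightarrow> b \<in> Cl \<Longrightarrow> a + b \<in> Cl"
    and Pl: "\<forall>z. \<exists>e>0. \<exists>h. cvec_holomorphic_on h (ball z e) \<and> (\<forall>w\<in>ball z e. h w - P w \<in> Cl)"
    and Qh: "\<And>S. open S \<Longrightarrow> cvec_holomorphic_on Q S"
    and real: "\<And>x. P (embC x) - Q (embC x) \<in> Cl"
  shows "P z - Q z \<in> Cl"
proof -
  define X :: "complex^'n" where "X = (\<chi> k. complex_of_real (Re (z$k)))"
  define Y :: "complex^'n" where "Y = (\<chi> k. complex_of_real (Im (z$k)))"
  define \<gamma> where "\<gamma> = cline X Y"
  have \<gamma>r: "\<gamma> (of_real r) = embC (\<chi> k. Re (z$k) + r * Im (z$k))" for r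
    by (simp add: \<gamma>_def cline_def embC_def X_def Y_def vec_eq_iff)
  have \<gamma>i: "\<gamma> \<i> = z"
    by (simp add: \<gamma>_def cline_def X_def Y_def vec_eq_iff complex_eq_iff)
  define T where "T = {t. P (\<gamma> t) - Q (\<gamma> t) \<in> Cl}"
  have LOC: "\<exists>\<rho>>0. \<forall>t1 \<epsilon>. \<epsilon> > 0 \<and> (\<forall>r\<in>{0..\<epsilon>}. t1 + of_real r \<in> ball t0 \<rho> \<and> t1 + of_real r \<in> T)
               \<longrightarrow> ball t0 \<rho> \<subseteq> T" for t0
  proof -
    obtain e h where e: "e > 0" "cvec_holomorphic_on h (ball (\<gamma> t0) e)" "\<forall>w\<in>ball (\<gamma> t0) e. h w - P w \<in> Cl"
      using Pl by blast
    have "continuous (at t0) \<gamma>"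
      unfolding \<gamma>_def using cline_deriv has_derivative_continuous by blast
    then obtain \<rho> where \<rho>: "\<rho> > 0" "\<forall>s. dist s t0 < \<rho> \<longrightarrow> dist (\<gamma> s) (\<gamma> t0) < e"
      unfolding continuous_at_eps_delta using e(1) by blast
    have sub: "ball t0 \<rho> \<subseteq> {t. cline X Y t \<in> ball (\<gamma> t0) e}"
      using \<rho>(2) by (auto simp: \<gamma>_def dist_commute)
    have Qb: "cvec_holomorphic_on Q (ball (\<gamma> t0) e)" using Qh by simp
    have holj: "(\<lambda>t. h (\<gamma> t) $ j - Q (\<gamma> t) $ j) holomorphic_on ball t0 \<rho>" for j
      unfolding \<gamma>_def
      by (intro holomorphic_on_diff holomorphic_on_subset[OF holo_comp_line[OF e(2)] sub]
                holomorphic_on_subset[OF holo_comp_line[OF Qb] sub])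
    have inCl: "h (\<gamma> s) - Q (\<gamma> s) \<in> Cl" if "s \<in> ball t0 \<rho>" "s \<in> T" for s
    proof -
      have "\<gamma> s \<in> ball (\<gamma> t0) e" using sub that(1) by (auto simp: \<gamma>_def)
      then have "h (\<gamma> s) - P (\<gamma> s) \<in> Cl" using e(3) by blast
      moreover have "P (\<gamma> s) - Q (\<gamma> s) \<in> Cl" using that(2) by (simp add: T_def)
      ultimately show ?thesis using Cla by fastforce
    qed
    show ?thesis
    proof (intro exI[of _ \<rho>] conjI \<rho>(1) allI impI subsetI)
      fix t1 \<epsilon> t
      assume H: "0 < \<epsilon> \<and> (\<forall>r\<in>{0..\<epsilon>}. t1 + complex_of_real r \<in> ball t0 \<rho> \<and> t1 + complex_of_real r \<in> T)"
        and t: "t \<in> ball t0 \<rho>"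
      have t1: "t1 \<in> ball t0 \<rho>" "t1 \<in> T" using H by (metis add.right_neutral atLeastAtMost_iff of_real_0 order_refl less_eq_real_def)+
      have "h (\<gamma> t) $ j - Q (\<gamma> t) $ j = h (\<gamma> t1) $ j - Q (\<gamma> t1) $ j" for j
      proof (rule holo_const_seg[OF holj[of j] open_ball convex_connected[OF convex_ball], of \<epsilon> t1 "(\<lambda>v. v $ j) ` Cl"])
        show "0 < \<epsilon>" using H by blast
        show "countable ((\<lambda>v. v $ j) ` Cl)" using Clc by simp
        show "t \<in> ball t0 \<rho>" by fact
        show "\<forall>r\<in>{0..\<epsilon>}. t1 + complex_of_real r \<in> ball t0 \<rho> \<and>
              h (\<gamma> (t1 + complex_of_real r)) $ j - Q (\<gamma> (t1 + complex_of_real r)) $ j \<in> (\<lambda>v. v $ j) ` Cl"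
        proof
          fix r assume r: "r \<in> {0..\<epsilon>}"
          have "h (\<gamma> (t1 + of_real r)) - Q (\<gamma> (t1 + of_real r)) \<in> Cl" using H r inCl by blast
          then show "t1 + complex_of_real r \<in> ball t0 \<rho> \<and>
              h (\<gamma> (t1 + complex_of_real r)) $ j - Q (\<gamma> (t1 + complex_of_real r)) $ j \<in> (\<lambda>v. v $ j) ` Cl"
            using H r by (metis (no_types, lifting) image_eqI vector_minus_component)
        qed
      qed
      then have "h (\<gamma> t) - Q (\<gamma> t) = h (\<gamma> t1) - Q (\<gamma> t1)" by (simp add: vec_eq_iff)
      then have k: "h (\<gamma> t) - Q (\<gamma> t) \<in> Cl" using inCl[OF t1] by simp
      have "\<gamma> t \<in> ball (\<gamma> t0) e" using sub t by (auto simp: \<gamma>_def)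
      then have "h (\<gamma> t) - P (\<gamma> t) \<in> Cl" using e(3) by blast
      from Cld[OF k this] show "t \<in> T" by (simp add: T_def)
    qed
  qed
  define S where "S = {t. \<exists>\<epsilon>>0. ball t \<epsilon> \<subseteq> T}"
  have ST: "S \<subseteq> T" unfolding S_def by auto
  have openS: "open S"
    unfolding open_contains_ball
  proof
    fix t assume "t \<in> S"
    then obtain \<epsilon> where \<epsilon>: "\<epsilon> > 0" "ball t \<epsilon> \<subseteq> T" unfolding S_def by blast
    have "ball t \<epsilon> \<subseteq> S"
    proof
      fix s assume s: "s \<in> ball t \<epsilon>"
      have "ball s (\<epsilon> - dist t s) \<subseteq> ball t \<epsilon>"
        by (auto simp: ball_def) (smt (verit) dist_triangle)
      then show "s \<in> S" unfolding S_def using s \<epsilon>(2) by (auto intro!: exI[of _ "\<epsilon> - dist t s"])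
    qed
    then show "\<exists>e>0. ball t e \<subseteq> S" using \<epsilon> by blast
  qed
  have openC: "open (- S)"
    unfolding open_contains_ball
  proof
    fix t0 assume t0: "t0 \<in> - S"
    obtain \<rho> where \<rho>: "\<rho> > 0" "\<forall>t1 \<epsilon>. \<epsilon> > 0 \<and> (\<forall>r\<in>{0..\<epsilon>}. t1 + of_real r \<in> ball t0 \<rho> \<and> t1 + of_real r \<in> T)
               \<longrightarrow> ball t0 \<rho> \<subseteq> T" using LOC by blast
    have "ball t0 \<rho> \<subseteq> - S"
    proof
      fix t1 assume t1: "t1 \<in> ball t0 \<rho>"
      show "t1 \<in> - S"
      proof
        assume "t1 \<in> S"
        then obtain \<epsilon> where \<epsilon>: "\<epsilon> > 0" "ball t1 \<epsilon> \<subseteq> T" unfolding S_def by blast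
        define \<epsilon>' where "\<epsilon>' = min (\<epsilon>/2) ((\<rho> - dist t0 t1)/2)"
        have d0: "dist t0 t1 < \<rho>" using t1 by simp
        have m1: "\<epsilon>' \<le> \<epsilon>/2" "\<epsilon>' \<le> (\<rho> - dist t0 t1)/2" unfolding \<epsilon>'_def by (rule min.cobounded1, rule min.cobounded2)
        have "\<epsilon>' > 0" unfolding \<epsilon>'_def using \<epsilon>(1) d0 by simp
        moreover have "\<epsilon>' < \<epsilon>" using m1(1) \<epsilon>(1) by linarith
        moreover have "dist t0 t1 + \<epsilon>' < \<rho>"
        proof -
          have "dist t0 t1 + \<epsilon>' \<le> dist t0 t1 + (\<rho> - dist t0 t1)/2" using m1(2) by simp
          also have "\<dots> < \<rho>" using d0 by (simp add: field_simps)
          finally show ?thesis .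
        qed
        ultimately have \<epsilon>': "\<epsilon>' > 0" "\<epsilon>' < \<epsilon>" "dist t0 t1 + \<epsilon>' < \<rho>" by blast+
        have "\<forall>r\<in>{0..\<epsilon>'}. t1 + of_real r \<in> ball t0 \<rho> \<and> t1 + of_real r \<in> T"
        proof
          fix r assume r: "r \<in> {0..\<epsilon>'}"
          have d: "dist t1 (t1 + of_real r) = r" using r by (simp add: dist_norm)
          have "dist t0 (t1 + of_real r) \<le> dist t0 t1 + dist t1 (t1 + of_real r)" by (rule dist_triangle)
          then have "t1 + of_real r \<in> ball t0 \<rho>" using d r \<epsilon>' by simp
          moreover have "t1 + of_real r \<in> ball t1 \<epsilon>" using d r \<epsilon>' by simp
          ultimately show "t1 + of_real r \<in> ball t0 \<rho> \<and> t1 + of_real r \<in> T" using \<epsilon>(2) by blast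
        qed
        then have "ball t0 \<rho> \<subseteq> T" using \<rho>(2) \<epsilon>'(1) by blast
        then have "t0 \<in> S" unfolding S_def using \<rho>(1) by blast
        then show False using t0 by simp
      qed
    qed
    then show "\<exists>e>0. ball t0 e \<subseteq> - S" using \<rho>(1) by blast
  qed
  have "0 \<in> S"
  proof -
    obtain \<rho> where \<rho>: "\<rho> > 0" "\<forall>t1 \<epsilon>. \<epsilon> > 0 \<and> (\<forall>r\<in>{0..\<epsilon>}. t1 + of_real r \<in> ball 0 \<rho> \<and> t1 + of_real r \<in> T)
               \<longrightarrow> ball 0 \<rho> \<subseteq> T" using LOC by blast
    have "\<forall>r\<in>{0..\<rho>/2}. (0::complex) + of_real r \<in> ball 0 \<rho> \<and> (0::complex) + of_real r \<in> T"
    proof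
      fix r assume r: "r \<in> {0..\<rho>/2}"
      have "(0::complex) + of_real r \<in> ball 0 \<rho>" using r \<rho>(1) by (simp add: dist_norm)
      moreover have "(0::complex) + of_real r \<in> T" using real unfolding T_def by (simp add: \<gamma>r)
      ultimately show "(0::complex) + of_real r \<in> ball 0 \<rho> \<and> (0::complex) + of_real r \<in> T" by blast
    qed
    then have "ball 0 \<rho> \<subseteq> T" using \<rho> by (meson half_gt_zero)
    then show ?thesis unfolding S_def using \<rho>(1) by blast
  qed
  have "S \<inter> UNIV = {} \<or> - S \<inter> UNIV = {}"
    by (rule connectedD[OF connected_UNIV openS openC]) auto
  then have "S = UNIV" using \<open>0 \<in> S\<close> by auto
  then have "\<i> \<in> T" using ST by auto
  then show ?thesis unfolding T_def using \<gamma>i by simp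
qed


definition rcomb :: "('n::finite \<Rightarrow> real^'n) \<Rightarrow> ('n \<Rightarrow> real) \<Rightarrow> real^'n" where
  "rcomb b c = (\<Sum>i\<in>UNIV. c i *\<^sub>R b i)"

lemma ccomb_cmk: "ccomb b u = cmk (rcomb b (\<lambda>i. Re (u i))) (rcomb b (\<lambda>i. Im (u i)))"
  by (simp add: ccomb_def cmk_def rcomb_def vec_eq_iff complex_eq_iff sum_component)

lemma rcomb_inj:
  assumes "lattice_basis b" "rcomb b c = rcomb b d"
  shows "c = d"
proof -
  have "(\<Sum>i\<in>UNIV. (c i - d i) *\<^sub>R b i) = 0"
    using assms(2) by (simp add: rcomb_def scaleR_diff_left sum_subtractf)
  then show ?thesis using assms(1) unfolding lattice_basis_def by (auto simp: fun_eq_iff)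
qed

lemma rcomb_surj:
  fixes b :: "'n::finite \<Rightarrow> real^'n"
  assumes "lattice_basis b"
  shows "\<exists>c. rcomb b c = x"
proof -
  have inj: "inj (bmap b)"
    using linear_injective_0[OF linear_bmap] bmap_inj0[OF assms] by blast
  have "surj (bmap b)"
    using linear_injective_imp_surjective[OF linear_bmap inj] by simp
  then obtain v where "bmap b v = x" by (metis surjD)
  then have "rcomb b (\<lambda>i. v $ i) = x" by (simp add: bmap_def rcomb_def)
  then show ?thesis by blast
qed

lemma ccomb_inj:
  assumes "lattice_basis b" "ccomb b u = ccomb b v"
  shows "u = v"
proof -
  have "Rev (ccomb b u) = Rev (ccomb b v)" "Imv (ccomb b u) = Imv (ccomb b v)" using assms(2) by simp_all
  then have "(\<lambda>i. Re (u i)) = (\<lambda>i. Re (v i))" "(\<lambda>i. Im (u i)) = (\<lambda>i. Im (v i))"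
    unfolding ccomb_cmk Rev_cmk Imv_cmk using rcomb_inj[OF assms(1)] by blast+
  then show ?thesis by (auto simp: fun_eq_iff complex_eq_iff)
qed

lemma ccomb_surj:
  assumes "lattice_basis b"
  shows "\<exists>u. ccomb b u = z"
proof -
  obtain c1 c2 where c: "rcomb b c1 = Rev z" "rcomb b c2 = Imv z" using rcomb_surj[OF assms] by metis
  have "ccomb b (\<lambda>i. Complex (c1 i) (c2 i)) = z"
    unfolding ccomb_cmk using c cmk_RI by simp
  then show ?thesis by blast
qed

lemma ccoords_ccomb:
  assumes "lattice_basis b" shows "ccoords b (ccomb b u) = u"
  unfolding ccoords_def
proof (rule the_equality)
  show "ccomb b u = ccomb b u" ..
  show "\<And>v. ccomb b v = ccomb b u \<Longrightarrow> v = u" using ccomb_inj[OF assms] by blast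
qed

lemma ccomb_ccoords:
  assumes "lattice_basis b" shows "ccomb b (ccoords b z) = z"
proof -
  obtain u where u: "ccomb b u = z" using ccomb_surj[OF assms] by blast
  then have "ccoords b z = u" using ccoords_ccomb[OF assms] by blast
  then show ?thesis using u by simp
qed

lemma ccomb_add: "ccomb b u + ccomb b v = ccomb b (\<lambda>i. u i + v i)"
  by (simp add: ccomb_def vec_eq_iff sum.distrib distrib_right)

lemma A_rcomb:
  assumes A: "linear A" and N: "\<forall>i. A (b i) = rcomb b (\<lambda>k. of_int (N i k))"
  shows "A (rcomb b c) = rcomb b (\<lambda>k. \<Sum>i\<in>UNIV. c i * of_int (N i k))"
proof -
  have "A (rcomb b c) = (\<Sum>i\<in>UNIV. c i *\<^sub>R A (b i))"
    unfolding rcomb_def by (simp add: linear_sum[OF A] linear_scale[OF A])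
  also have "\<dots> = (\<Sum>i\<in>UNIV. \<Sum>k\<in>UNIV. (c i * of_int (N i k)) *\<^sub>R b k)"
    using N by (simp add: rcomb_def scaleR_sum_right)
  also have "\<dots> = rcomb b (\<lambda>k. \<Sum>i\<in>UNIV. c i * of_int (N i k))"
    unfolding rcomb_def by (subst sum.swap) (simp add: scaleR_sum_left)
  finally show ?thesis .
qed

lemma Cx_ccomb:
  assumes A: "linear A" and N: "\<forall>i. A (b i) = rcomb b (\<lambda>k. of_int (N i k))"
  shows "Cx A (ccomb b u) = ccomb b (\<lambda>k. \<Sum>i\<in>UNIV. u i * of_int (N i k))"
  unfolding Cx_def ccomb_cmk Rev_cmk Imv_cmk A_rcomb[OF A N] by simp

lemma b_in_lat: "b i \<in> lattice b"
proof -
  have "(\<Sum>l\<in>UNIV. of_int (if l = i then 1 else 0) *\<^sub>R b l) = (\<Sum>l\<in>UNIV. if l = i then b l else 0)"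
    by (rule sum.cong) auto
  also have "\<dots> = b i" by simp
  finally show ?thesis unfolding lattice_iff by (intro exI[of _ "\<lambda>l. if l = i then 1 else 0"]) simp
qed

lemma affine_algebraic:
  fixes b :: "'n::finite \<Rightarrow> real^'n"
  assumes bb: "lattice_basis b" and A: "linear A" and Al: "\<forall>l\<in>lattice b. A l \<in> lattice b"
  shows "ctorus_algebraic b (\<lambda>z. Cx A z + embC c)"
proof -
  have "\<forall>i. \<exists>k. A (b i) = rcomb b (\<lambda>l. of_int (k l))"
  proof
    fix i
    have "A (b i) \<in> lattice b" using Al b_in_lat by blast
    then obtain k where "A (b i) = (\<Sum>l\<in>UNIV. of_int (k l) *\<^sub>R b l)" unfolding lattice_iff by blast
    then show "\<exists>k. A (b i) = rcomb b (\<lambda>l. of_int (k l))" unfolding rcomb_def by blast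
  qed
  from choice[OF this] obtain N where N: "\<forall>i. A (b i) = rcomb b (\<lambda>k. of_int (N i k))"
    by blast
  obtain w where w: "ccomb b w = embC c" using ccomb_surj[OF bb] by blast
  define K where "K j = {\<lambda>i. N i j}" for j
  define cf where "cf j = (\<lambda>_::'n \<Rightarrow> int. exp (2 * of_real pi * \<i> * w j))" for j
  have "expmap b (Cx A z + embC c) $ j = laurent_eval (K j) (cf j) (expmap b z)" for z j
  proof -
    define u where "u = ccoords b z"
    have z: "z = ccomb b u" unfolding u_def using ccomb_ccoords[OF bb] by simp
    have "Cx A z + embC c = ccomb b (\<lambda>k. (\<Sum>i\<in>UNIV. u i * of_int (N i k)) + w k)"
      unfolding z Cx_ccomb[OF A N] w[symmetric] ccomb_add ..
    then have "expmap b (Cx A z + embC c) $ j = exp (2 * of_real pi * \<i> * ((\<Sum>i\<in>UNIV. u i * of_int (N i j)) + w j))"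
      by (simp add: expmap_def ccoords_ccomb[OF bb])
    also have "\<dots> = exp (2 * of_real pi * \<i> * w j) * exp (\<Sum>i\<in>UNIV. of_int (N i j) * (2 * of_real pi * \<i> * u i))"
      by (simp add: exp_add[symmetric] algebra_simps sum_distrib_left)
    also have "\<dots> = exp (2 * of_real pi * \<i> * w j) * (\<Prod>i\<in>UNIV. exp (2 * of_real pi * \<i> * u i) powi (N i j))"
      by (simp add: exp_sum exp_power_int)
    also have "\<dots> = laurent_eval (K j) (cf j) (expmap b z)"
      by (simp add: laurent_eval_def K_def cf_def expmap_def u_def)
    finally show ?thesis .
  qed
  then show ?thesis unfolding ctorus_algebraic_def K_def by (intro exI[of _ K] exI[of _ cf]) (simp add: K_def)
qed


lemma rigid:
  fixes b :: "'n::finite \<Rightarrow> real^'n"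
  assumes disc: "\<forall>l\<in>lattice b. l \<noteq> 0 \<longrightarrow> D \<le> norm l" and D: "D > 0"
    and F: "linear Fm" and h: "\<forall>x. Fm x + c \<in> lattice b"
  shows "(\<forall>x. Fm x = 0) \<and> c \<in> lattice b"
proof -
  have c: "c \<in> lattice b" using h[rule_format, of 0] linear_0[OF F] by simp
  have Fl: "Fm x \<in> lattice b" for x using lat_diff[OF h[rule_format, of x] c] by simp
  have "Fm x = 0" for x
  proof (rule ccontr)
    assume ne: "Fm x \<noteq> 0"
    define t where "t = D / (2 * norm (Fm x))"
    have np: "norm (Fm x) > 0" using ne by simp
    have "Fm (t *\<^sub>R x) = t *\<^sub>R Fm x" using linear_scale[OF F] by simp
    moreover have "norm (t *\<^sub>R Fm x) = D/2" using np D by (simp add: t_def)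
    ultimately have n: "norm (Fm (t *\<^sub>R x)) = D/2" "Fm (t *\<^sub>R x) \<noteq> 0" using D by auto
    then have "D \<le> norm (Fm (t *\<^sub>R x))" using disc Fl[of "t *\<^sub>R x"] by blast
    then show False using n(1) D by linarith
  qed
  with c show ?thesis by blast
qed

lemma cl_embC: "l \<in> lattice b \<Longrightarrow> embC l \<in> clattice b"
  by (simp add: clattice_def)

lemma cl_diff:
  assumes "a \<in> clattice b" "a' \<in> clattice b" shows "a - a' \<in> clattice b"
proof -
  obtain l1 l2 where "l1 \<in> lattice b" "l2 \<in> lattice b" "a = embC l1" "a' = embC l2"
    using assms unfolding clattice_def by blast
  then have "a - a' = embC (l1 - l2)" "l1 - l2 \<in> lattice b" using lat_diff[of l1 b l2] embC_diff[of l1 l2] by auto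
  then show ?thesis unfolding clattice_def by (intro rev_image_eqI)
qed

lemma cl_add:
  assumes "a \<in> clattice b" "a' \<in> clattice b" shows "a + a' \<in> clattice b"
proof -
  obtain l1 l2 where "l1 \<in> lattice b" "l2 \<in> lattice b" "a = embC l1" "a' = embC l2"
    using assms unfolding clattice_def by blast
  then have "a + a' = embC (l1 + l2)" "l1 + l2 \<in> lattice b" using lat_add[of l1 b l2] embC_add[of l1 l2] by auto
  then show ?thesis unfolding clattice_def by (intro rev_image_eqI)
qed

lemma cl_countable: "countable (clattice b)"
proof -
  have "lattice b = range (\<lambda>k. \<Sum>i\<in>UNIV. of_int (k i) *\<^sub>R b i)" unfolding lattice_def by auto
  then have "countable (lattice b)" by simp
  then show ?thesis unfolding clattice_def by simp
qed

theorem proposition1p21: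
  fixes b :: "'n::finite \<Rightarrow> real^'n"
    and G :: "('g, 'z) monoid_scheme"
    and \<phi> :: "'g \<Rightarrow> real^'n \<Rightarrow> real^'n"
  assumes "lattice_basis b"
    and "group G" and "finite (carrier G)"
    and "quot_action (lat_eq b) G \<phi>"
    and "free_quot_action (lat_eq b) G \<phi>"
    and "\<forall>g\<in>carrier G. torus_isometry b (\<phi> g)"
  shows "\<exists>\<psi>. ctorus_holo_action b G \<psi> \<and> equivariant_incl b G \<phi> \<psi>
           \<and> (\<forall>\<psi>'. ctorus_holo_action b G \<psi>' \<and> equivariant_incl b G \<phi> \<psi>'
                  \<longrightarrow> (\<forall>g\<in>carrier G. \<forall>z. clat_eq b (\<psi>' g z) (\<psi> g z)))
           \<and> (\<forall>g\<in>carrier G. ctorus_algebraic b (\<psi> g))"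
proof -
  note bb = assms(1)
  obtain D where D: "D > 0" and disc: "\<forall>l\<in>lattice b. l \<noteq> 0 \<longrightarrow> D \<le> norm l"
    using lat_discrete[OF bb] by blast
  have qa1: "\<And>x. \<phi> \<one>\<^bsub>G\<^esub> x - x \<in> lattice b"
    and qa2: "\<And>g h x. g \<in> carrier G \<Longrightarrow> h \<in> carrier G \<Longrightarrow> \<phi> (g \<otimes>\<^bsub>G\<^esub> h) x - \<phi> g (\<phi> h x) \<in> lattice b"
    using assms(4) unfolding quot_action_def lat_eq_def by blast+
  have one: "\<one>\<^bsub>G\<^esub> \<in> carrier G" and mc: "\<And>g h. g \<in> carrier G \<Longrightarrow> h \<in> carrier G \<Longrightarrow> g \<otimes>\<^bsub>G\<^esub> h \<in> carrier G"
    using assms(2) by (auto intro: monoid.one_closed monoid.m_closed group.is_monoid)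
  have ex: "\<forall>g\<in>carrier G. \<exists>p. linear (fst p) \<and> (\<forall>l\<in>lattice b. fst p l \<in> lattice b)
              \<and> (\<forall>x. \<phi> g x - (fst p x + snd p) \<in> lattice b)"
  proof
    fix g assume g: "g \<in> carrier G"
    have "\<forall>x y. tdist b (\<phi> g x) (\<phi> g y) = tdist b x y"
      using assms(6) g unfolding torus_isometry_def by blast
    from torus_iso_affine[OF disc D this] obtain A c where
      "linear A \<and> (\<forall>l\<in>lattice b. A l \<in> lattice b) \<and> (\<forall>x. \<phi> g x - (A x + c) \<in> lattice b)" by blast
    then show "\<exists>p. linear (fst p) \<and> (\<forall>l\<in>lattice b. fst p l \<in> lattice b)
              \<and> (\<forall>x. \<phi> g x - (fst p x + snd p) \<in> lattice b)" by (intro exI[of _ "(A, c)"]) simp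
  qed
  from bchoice[OF ex] obtain F where F: "\<forall>g\<in>carrier G. linear (fst (F g)) \<and> (\<forall>l\<in>lattice b. fst (F g) l \<in> lattice b)
              \<and> (\<forall>x. \<phi> g x - (fst (F g) x + snd (F g)) \<in> lattice b)" by blast
  define AA where "AA g = fst (F g)" for g
  define cc where "cc g = snd (F g)" for g
  have Alin: "linear (AA g)" and Alat: "\<And>l. l \<in> lattice b \<Longrightarrow> AA g l \<in> lattice b"
    and Aapp: "\<And>x. \<phi> g x - (AA g x + cc g) \<in> lattice b" if "g \<in> carrier G" for g
    using F that unfolding AA_def cc_def by blast+
  define \<psi> where "\<psi> = (\<lambda>g z. Cx (AA g) z + embC (cc g))"
  have equiv: "\<psi> g (embC x) - embC (\<phi> g x) \<in> clattice b" if g: "g \<in> carrier G" for g x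
  proof -
    have "\<psi> g (embC x) - embC (\<phi> g x) = embC (- (\<phi> g x - (AA g x + cc g)))"
      unfolding \<psi>_def Cx_embC[OF Alin[OF g]] by (simp add: embC_def vec_eq_iff)
    moreover have "embC (- (\<phi> g x - (AA g x + cc g))) \<in> clattice b"
      by (rule cl_embC[OF lat_uminus[OF Aapp[OF g]]])
    ultimately show ?thesis by simp
  qed
  have holo: "ctorus_holomorphic b (\<psi> g)" if g: "g \<in> carrier G" for g
    unfolding ctorus_holomorphic_def clat_eq_def
  proof (intro allI exI[of _ 1] conjI exI[of _ "\<psi> g"] ballI)
    show "(0::real) < 1" by simp
    fix z show "cvec_holomorphic_on (\<psi> g) (ball z 1)"
      unfolding \<psi>_def by (rule Cx_holo[OF Alin[OF g] open_ball])
    have e0: "embC 0 = (0::complex^'n)" by (simp add: embC_def vec_eq_iff)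
    fix w show "\<psi> g w - \<psi> g w \<in> clattice b" using cl_embC[OF lat_0[of b]] e0 by simp
  qed
  have qa: "quot_action (clat_eq b) G \<psi>"
    unfolding quot_action_def clat_eq_def
  proof (intro conjI ballI allI impI)
    fix g z w assume g: "g \<in> carrier G" and zw: "z - w \<in> clattice b"
    then obtain l where l: "l \<in> lattice b" "z - w = embC l" unfolding clattice_def by blast
    have "\<psi> g z - \<psi> g w = Cx (AA g) (z - w)" unfolding \<psi>_def using Cx_diff[OF Alin[OF g]] by simp
    also have "\<dots> = embC (AA g l)" using l Cx_embC[OF Alin[OF g]] by simp
    finally show "\<psi> g z - \<psi> g w \<in> clattice b" using cl_embC Alat[OF g l(1)] by simp
  next
    fix z
    have eq1: "(AA \<one>\<^bsub>G\<^esub> x - x) + cc \<one>\<^bsub>G\<^esub> = (\<phi> \<one>\<^bsub>G\<^esub> x - x) - (\<phi> \<one>\<^bsub>G\<^esub> x - (AA \<one>\<^bsub>G\<^esub> x + cc \<one>\<^bsub>G\<^esub>))" for x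
      by (simp add: algebra_simps)
    have "\<forall>x. (AA \<one>\<^bsub>G\<^esub> x - x) + cc \<one>\<^bsub>G\<^esub> \<in> lattice b"
      unfolding eq1 by (intro allI lat_diff[OF qa1 Aapp[OF one]])
    moreover have "linear (\<lambda>x. AA \<one>\<^bsub>G\<^esub> x - x)"
      using linear_compose_sub[OF Alin[OF one] linear_id] by (simp add: id_def)
    ultimately have "(\<forall>x. AA \<one>\<^bsub>G\<^esub> x - x = 0) \<and> cc \<one>\<^bsub>G\<^esub> \<in> lattice b"
      using rigid[OF disc D] by blast
    then have r: "\<forall>x. AA \<one>\<^bsub>G\<^esub> x = x" "cc \<one>\<^bsub>G\<^esub> \<in> lattice b" by auto
    then have "AA \<one>\<^bsub>G\<^esub> = id" by auto
    then have "\<psi> \<one>\<^bsub>G\<^esub> z - z = embC (cc \<one>\<^bsub>G\<^esub>)" unfolding \<psi>_def by (simp add: Cx_id)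
    then show "\<psi> \<one>\<^bsub>G\<^esub> z - z \<in> clattice b" using cl_embC r(2) by simp
  next
    fix g h z assume g: "g \<in> carrier G" and h: "h \<in> carrier G"
    have gh: "g \<otimes>\<^bsub>G\<^esub> h \<in> carrier G" using mc g h .
    define a where "a = AA (g \<otimes>\<^bsub>G\<^esub> h)"
    define c1 where "c1 = cc (g \<otimes>\<^bsub>G\<^esub> h)"
    have la: "linear a" unfolding a_def using Alin[OF gh] .
    have lg: "linear (AA g)" using Alin[OF g] .
    have lh: "linear (AA h)" using Alin[OF h] .
    have "(a x - AA g (AA h x)) + (c1 - AA g (cc h) - cc g) \<in> lattice b" for x
    proof -
      have t1: "\<phi> (g \<otimes>\<^bsub>G\<^esub> h) x - (a x + c1) \<in> lattice b" unfolding a_def c1_def using Aapp[OF gh] .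
      have t0: "\<phi> (g \<otimes>\<^bsub>G\<^esub> h) x - \<phi> g (\<phi> h x) \<in> lattice b" using qa2[OF g h] .
      have t2: "\<phi> g (\<phi> h x) - (AA g (\<phi> h x) + cc g) \<in> lattice b" using Aapp[OF g] .
      have t3: "AA g (\<phi> h x - (AA h x + cc h)) \<in> lattice b" using Alat[OF g Aapp[OF h]] .
      have e: "(a x - AA g (AA h x)) + (c1 - AA g (cc h) - cc g)
          = ((t0' + t2') + t3') - t1'" if "t0' = \<phi> (g \<otimes>\<^bsub>G\<^esub> h) x - \<phi> g (\<phi> h x)"
           "t1' = \<phi> (g \<otimes>\<^bsub>G\<^esub> h) x - (a x + c1)" "t2' = \<phi> g (\<phi> h x) - (AA g (\<phi> h x) + cc g)"
           "t3' = AA g (\<phi> h x - (AA h x + cc h))" for t0' t1' t2' t3'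
        unfolding that linear_diff[OF lg] linear_add[OF lg] by (simp add: algebra_simps)
      show ?thesis unfolding e[OF refl refl refl refl]
        by (intro lat_diff lat_add t0 t1 t2 t3)
    qed
    then have "\<forall>x. (a x - (AA g \<circ> AA h) x) + (c1 - AA g (cc h) - cc g) \<in> lattice b" by simp
    from rigid[OF disc D linear_compose_sub[OF la linear_compose[OF lh lg]] this]
    have r: "\<forall>x. a x = (AA g \<circ> AA h) x" "c1 - AA g (cc h) - cc g \<in> lattice b" by auto
    then have aeq: "a = AA g \<circ> AA h" by auto
    have "\<psi> (g \<otimes>\<^bsub>G\<^esub> h) z - \<psi> g (\<psi> h z) = embC (c1 - AA g (cc h) - cc g)"
      unfolding \<psi>_def a_def[symmetric] c1_def[symmetric] aeq
      by (simp add: Cx_add[OF lg] Cx_embC[OF lg] Cx_comp embC_diff)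
    then show "\<psi> (g \<otimes>\<^bsub>G\<^esub> h) z - \<psi> g (\<psi> h z) \<in> clattice b" using cl_embC r(2) by simp
  qed
  have act: "ctorus_holo_action b G \<psi>" unfolding ctorus_holo_action_def using qa holo by blast
  have eqi: "equivariant_incl b G \<phi> \<psi>" unfolding equivariant_incl_def clat_eq_def using equiv by blast
  have uniq: "\<forall>\<psi>'. ctorus_holo_action b G \<psi>' \<and> equivariant_incl b G \<phi> \<psi>'
                  \<longrightarrow> (\<forall>g\<in>carrier G. \<forall>z. clat_eq b (\<psi>' g z) (\<psi> g z))"
  proof (intro allI impI ballI)
    fix \<psi>' g z assume H: "ctorus_holo_action b G \<psi>' \<and> equivariant_incl b G \<phi> \<psi>'" and g: "g \<in> carrier G"
    have Pl: "\<forall>z. \<exists>e>0. \<exists>h. cvec_holomorphic_on h (ball z e) \<and> (\<forall>w\<in>ball z e. h w - \<psi>' g w \<in> clattice b)"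
      using H g unfolding ctorus_holo_action_def ctorus_holomorphic_def clat_eq_def by blast
    have Qh: "\<And>S. open S \<Longrightarrow> cvec_holomorphic_on (\<psi> g) S"
      unfolding \<psi>_def using Cx_holo[OF Alin[OF g]] by blast
    have real: "\<psi>' g (embC x) - \<psi> g (embC x) \<in> clattice b" for x
    proof -
      have "\<psi>' g (embC x) - embC (\<phi> g x) \<in> clattice b"
        using H g unfolding equivariant_incl_def clat_eq_def by blast
      from cl_diff[OF this equiv[OF g, of x]] show ?thesis by simp
    qed
    show "clat_eq b (\<psi>' g z) (\<psi> g z)"
      unfolding clat_eq_def
      by (rule uniq_main[OF cl_countable cl_diff cl_add Pl Qh real])
  qed
  have alg: "\<forall>g\<in>carrier G. ctorus_algebraic b (\<psi> g)"
  proof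
    fix g assume g: "g \<in> carrier G"
    have "\<forall>l\<in>lattice b. AA g l \<in> lattice b" using Alat[OF g] by blast
    then show "ctorus_algebraic b (\<psi> g)" unfolding \<psi>_def by (rule affine_algebraic[OF bb Alin[OF g]])
  qed
  show ?thesis using act eqi uniq alg by blast
qed


end
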